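(* Let $C_{-1},C_0,C_1$ be nonnegative $m\times m$ matrices, where $m$ may be countably infinite, and let $C_*(\theta)=e^{-\theta}C_{-1}+C_0+e^{\theta}C_1$ for $\theta\in\mathbb{R}$. Assume that $C_*(0)^n$ is finite for every $n\in\mathbb{Z}_+$ and that $C_*(0)$ is irreducible. For a positive integer $k$, let $C^{[k]}(\theta)$ be the $k\times k$ block matrix (blocks of size $m\times m$, block indices $1,\dots,k$) whose $(i,i')$ block is the sum of: $C_0$ if $i'=i$; $C_1$ if $i'=i+1$; $C_{-1}$ if $i'=i-1$; $e^{-\theta}C_{-1}$ if $(i,i')=(1,k)$; $e^{\theta}C_1$ if $(i,i')=(k,1)$ (and $O$ if none applies). Then $\mathrm{cp}(C_*(\theta))=\mathrm{cp}(C^{[k]}(k\theta))$ for every $\theta\in\mathbb{R}$.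
   Context: For a nonnegative square matrix $A$ of finite or countable dimension, the convergence parameter is $\mathrm{cp}(A)=\sup\{r\ge0:\sum_{n\ge0}r^nA^n<\infty\text{ elementwise}\}$. Thus $C^{[k]}(\theta)$ is block tridiagonal with $C_{-1},C_0,C_1$ on the sub-, main and super-diagonals, plus corner blocks $e^{-\theta}C_{-1}$ in position $(1,k)$ and $e^{\theta}C_1$ in position $(k,1)$; contributions landing in the same block position (when $k\le2$) are added. *)

theory Defs
  imports "HOL-Analysis.Analysis"
begin

text \<open>Nonnegative matrices indexed by a (finite or countable) index set S, with entries
  in ennreal so that products of infinite matrices (possibly divergent sums) are well defined.\<close>

definition nnmat_mult :: "'i set \<Rightarrow> ('i \<Rightarrow> 'i \<Rightarrow> ennreal) \<Rightarrow> ('i \<Rightarrow> 'i \<Rightarrow> ennreal) \<Rightarrow> 'i \<Rightarrow> 'i \<Rightarrow> ennreal" where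
  "nnmat_mult S A B = (\<lambda>i j. \<Sum>\<^sub>\<infinity>l\<in>S. A i l * B l j)"

fun nnmat_pow :: "'i set \<Rightarrow> ('i \<Rightarrow> 'i \<Rightarrow> ennreal) \<Rightarrow> nat \<Rightarrow> 'i \<Rightarrow> 'i \<Rightarrow> ennreal" where
  "nnmat_pow S A 0 = (\<lambda>i j. if i = j then 1 else 0)"
| "nnmat_pow S A (Suc n) = nnmat_mult S (nnmat_pow S A n) A"

definition to_nn :: "('i \<Rightarrow> 'i \<Rightarrow> real) \<Rightarrow> 'i \<Rightarrow> 'i \<Rightarrow> ennreal" where
  "to_nn A = (\<lambda>i j. ennreal (A i j))"

definition conv_param :: "'i set \<Rightarrow> ('i \<Rightarrow> 'i \<Rightarrow> real) \<Rightarrow> ennreal" where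
  "conv_param S A = Sup {ennreal r | r. r \<ge> 0 \<and>
      (\<forall>i\<in>S. \<forall>j\<in>S. (\<Sum>n. ennreal r ^ n * nnmat_pow S (to_nn A) n i j) < top)}"

definition Cstar :: "('i \<Rightarrow> 'i \<Rightarrow> real) \<Rightarrow> ('i \<Rightarrow> 'i \<Rightarrow> real) \<Rightarrow> ('i \<Rightarrow> 'i \<Rightarrow> real) \<Rightarrow> real \<Rightarrow> 'i \<Rightarrow> 'i \<Rightarrow> real" where
  "Cstar Cm1 C0 C1 \<theta> = (\<lambda>i j. exp (-\<theta>) * Cm1 i j + C0 i j + exp \<theta> * C1 i j)"

text \<open>The k \<times> k block matrix C^[k](\<theta>); index (i,a) means row i within block a,
  block indices range over {1..k}; contributions to the same block are added.\<close>
definition Cblock :: "('i \<Rightarrow> 'i \<Rightarrow> real) \<Rightarrow> ('i \<Rightarrow> 'i \<Rightarrow> real) \<Rightarrow> ('i \<Rightarrow> 'i \<Rightarrow> real) \<Rightarrow> nat \<Rightarrow> real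
     \<Rightarrow> ('i \<times> nat) \<Rightarrow> ('i \<times> nat) \<Rightarrow> real" where
  "Cblock Cm1 C0 C1 k \<theta> = (\<lambda>(i, a) (j, b).
      (if b = a then C0 i j else 0)
    + (if b = a + 1 then C1 i j else 0)
    + (if a = b + 1 then Cm1 i j else 0)
    + (if a = 1 \<and> b = k then exp (-\<theta>) * Cm1 i j else 0)
    + (if a = k \<and> b = 1 then exp \<theta> * C1 i j else 0))"

end

theory Submission
  imports Defs
begin

lemma infsum_cmult_enn: "infsum (\<lambda>x. c * f x) A = (c::ennreal) * infsum f A"
proof -
  have "infsum (\<lambda>x. c * f x) A = (SUP F\<in>{F. finite F \<and> F\<subseteq>A}. sum (\<lambda>x. c * f x) F)"
    by (rule nonneg_infsum_complete) simp
  also have "\<dots> = (SUP F\<in>{F. finite F \<and> F\<subseteq>A}. c * sum f F)"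
    by (simp add: sum_distrib_left)
  also have "\<dots> = c * (SUP F\<in>{F. finite F \<and> F\<subseteq>A}. sum f F)"
    by (simp add: SUP_mult_left_ennreal)
  also have "(SUP F\<in>{F. finite F \<and> F\<subseteq>A}. sum f F) = infsum f A"
    by (rule nonneg_infsum_complete[symmetric]) simp
  finally show ?thesis .
qed

lemma infsum_sum_enn:
  fixes g :: "'b \<Rightarrow> 'a \<Rightarrow> ennreal"
  assumes "finite B"
  shows "infsum (\<lambda>x. \<Sum>b\<in>B. g b x) A = (\<Sum>b\<in>B. infsum (g b) A)"
  using assms
proof (induction B rule: finite_induct)
  case empty then show ?case by simp
next
  case (insert b B)
  have "infsum (\<lambda>x. \<Sum>b\<in>insert b B. g b x) A = infsum (\<lambda>x. g b x + (\<Sum>b\<in>B. g b x)) A"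
    using insert by simp
  also have "\<dots> = infsum (g b) A + infsum (\<lambda>x. \<Sum>b\<in>B. g b x) A"
    by (rule infsum_add) (auto intro: nonneg_summable_on_complete)
  finally show ?case using insert by simp
qed

lemma infsum_times_finite_enn:
  fixes f :: "'a \<times> 'b \<Rightarrow> ennreal"
  assumes "finite B"
  shows "infsum f (A \<times> B) = (\<Sum>c\<in>B. infsum (\<lambda>l. f (l, c)) A)"
  using assms
proof (induction B rule: finite_induct)
  case empty then show ?case by simp
next
  case (insert b B)
  have eq: "A \<times> insert b B = (A \<times> {b}) \<union> (A \<times> B)" by auto
  have "infsum f (A \<times> insert b B) = infsum f (A \<times> {b}) + infsum f (A \<times> B)"
    unfolding eq using insert by (intro infsum_Un_disjoint) (auto intro: nonneg_summable_on_complete)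
  moreover have "infsum f (A \<times> {b}) = infsum (\<lambda>l. f (l, b)) A"
  proof -
    have "A \<times> {b} = (\<lambda>l. (l, b)) ` A" by auto
    moreover have "inj_on (\<lambda>l. (l, b)) A" by (auto simp: inj_on_def)
    ultimately show ?thesis by (simp add: infsum_reindex o_def)
  qed
  ultimately show ?case using insert by simp
qed

lemma sum_if_eq_real: "finite B \<Longrightarrow> (\<Sum>b\<in>B. (f b::real) * (if b = t then y else 0)) = (if t \<in> B then f t * y else 0)"
  proof -
  assume "finite B"
  have "(\<Sum>b\<in>B. (f b::real) * (if b = t then y else 0)) = (\<Sum>b\<in>B. if b = t then f t * y else 0)"
    by (intro sum.cong) auto
  then show ?thesis using \<open>finite B\<close> by (simp add: sum.delta)
qed

lemma block_row:
  fixes Cm1 C0 C1 :: "'i \<Rightarrow> 'i \<Rightarrow> real"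
  assumes c: "c \<in> {1..k}"
  shows "(\<Sum>b\<in>{1..k}. exp ((real b - real c) * \<theta>) * Cblock Cm1 C0 C1 k (real k * \<theta>) (l, c) (j, b))
       = Cstar Cm1 C0 C1 \<theta> l j"
proof -
  let ?e = "\<lambda>b. exp ((real b - real c) * \<theta>)"
  have s: "(\<Sum>b\<in>{1..k}. ?e b * Cblock Cm1 C0 C1 k (real k * \<theta>) (l, c) (j, b)) =
     (\<Sum>b\<in>{1..k}. ?e b * (if b = c then C0 l j else 0))
   + (\<Sum>b\<in>{1..k}. ?e b * (if b = c + 1 then C1 l j else 0))
   + (\<Sum>b\<in>{1..k}. ?e b * (if b = c - 1 \<and> c \<ge> 2 then Cm1 l j else 0))
   + (\<Sum>b\<in>{1..k}. ?e b * (if b = k \<and> c = 1 then exp (- (real k * \<theta>)) * Cm1 l j else 0))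
   + (\<Sum>b\<in>{1..k}. ?e b * (if b = 1 \<and> c = k then exp (real k * \<theta>) * C1 l j else 0))"
    unfolding Cblock_def sum.distrib[symmetric]
    using c by (intro sum.cong refl) (auto simp: algebra_simps)
  have p1: "(\<Sum>b\<in>{1..k}. ?e b * (if b = c then C0 l j else 0)) = C0 l j"
    using c by (simp add: sum_if_eq_real)
  have p2: "(\<Sum>b\<in>{1..k}. ?e b * (if b = c + 1 then C1 l j else 0)) = (if c + 1 \<le> k then exp \<theta> * C1 l j else 0)"
    using c by (simp add: sum_if_eq_real)
  have p3: "(\<Sum>b\<in>{1..k}. ?e b * (if b = c - 1 \<and> c \<ge> 2 then Cm1 l j else 0)) = (if c \<ge> 2 then exp (-\<theta>) * Cm1 l j else 0)"
  proof (cases "c \<ge> 2")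
    case True
    then have "(\<Sum>b\<in>{1..k}. ?e b * (if b = c - 1 \<and> c \<ge> 2 then Cm1 l j else 0)) = (\<Sum>b\<in>{1..k}. ?e b * (if b = c - 1 then Cm1 l j else 0))"
      by simp
    also have "\<dots> = ?e (c - 1) * Cm1 l j" proof -
      have "c - 1 \<in> {1..k}" using c True by auto
      then show ?thesis by (subst sum_if_eq_real) simp_all
    qed
    also have "?e (c - 1) = exp (-\<theta>)" using True by (simp add: of_nat_diff)
    finally show ?thesis using True by simp
  qed simp
  have p4: "(\<Sum>b\<in>{1..k}. ?e b * (if b = k \<and> c = 1 then exp (- (real k * \<theta>)) * Cm1 l j else 0)) = (if c = 1 then exp (-\<theta>) * Cm1 l j else 0)"
  proof (cases "c = 1")
    case True
    then have "(\<Sum>b\<in>{1..k}. ?e b * (if b = k \<and> c = 1 then exp (- (real k * \<theta>)) * Cm1 l j else 0)) = (\<Sum>b\<in>{1..k}. ?e b * (if b = k then exp (- (real k * \<theta>)) * Cm1 l j else 0))"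
      by simp
    also have "\<dots> = ?e k * (exp (- (real k * \<theta>)) * Cm1 l j)" using c by (simp add: sum_if_eq_real)
    also have "\<dots> = exp ((real k - real c) * \<theta> + - (real k * \<theta>)) * Cm1 l j" by (simp only: exp_add mult.assoc)
    also have "(real k - real c) * \<theta> + - (real k * \<theta>) = - \<theta>" using True by (simp add: algebra_simps)
    finally show ?thesis using True by simp
  qed simp
  have p5: "(\<Sum>b\<in>{1..k}. ?e b * (if b = 1 \<and> c = k then exp (real k * \<theta>) * C1 l j else 0)) = (if c = k then exp \<theta> * C1 l j else 0)"
  proof (cases "c = k")
    case True
    then have "(\<Sum>b\<in>{1..k}. ?e b * (if b = 1 \<and> c = k then exp (real k * \<theta>) * C1 l j else 0)) = (\<Sum>b\<in>{1..k}. ?e b * (if b = 1 then exp (real k * \<theta>) * C1 l j else 0))"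
      by simp
    also have "\<dots> = ?e 1 * (exp (real k * \<theta>) * C1 l j)" using c by (simp add: sum_if_eq_real)
    also have "\<dots> = exp ((1 - real c) * \<theta> + real k * \<theta>) * C1 l j" by (simp only: exp_add mult.assoc of_nat_1)
    also have "(1 - real c) * \<theta> + real k * \<theta> = \<theta>" using True by (simp add: algebra_simps)
    finally show ?thesis using True by simp
  qed simp
  show ?thesis unfolding s p1 p2 p3 p4 p5 Cstar_def using c by auto
qed


lemma cblock_nn:
  fixes Cm1 C0 C1 :: "'i \<Rightarrow> 'i \<Rightarrow> real"
  assumes nonneg: "\<forall>i j. Cm1 i j \<ge> 0 \<and> C0 i j \<ge> 0 \<and> C1 i j \<ge> 0"
  shows "Cblock Cm1 C0 C1 k t (l, c) (j, b) \<ge> 0"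
proof -
  have a: "Cm1 l j \<ge> 0" "C0 l j \<ge> 0" "C1 l j \<ge> 0" using nonneg by auto
  show ?thesis unfolding Cblock_def prod.case
    by (intro add_nonneg_nonneg) (use a in auto)
qed
lemma ennreal_row:
  fixes Cm1 C0 C1 :: "'i \<Rightarrow> 'i \<Rightarrow> real"
  assumes nonneg: "\<forall>i j. Cm1 i j \<ge> 0 \<and> C0 i j \<ge> 0 \<and> C1 i j \<ge> 0"
    and c: "c \<in> {1..k}"
  shows "(\<Sum>b\<in>{1..k}. ennreal (exp ((real b - real c) * \<theta>)) * to_nn (Cblock Cm1 C0 C1 k (real k * \<theta>)) (l, c) (j, b))
       = to_nn (Cstar Cm1 C0 C1 \<theta>) l j"
proof -
  note nn = cblock_nn[OF nonneg]
  have "(\<Sum>b\<in>{1..k}. ennreal (exp ((real b - real c) * \<theta>)) * to_nn (Cblock Cm1 C0 C1 k (real k * \<theta>)) (l, c) (j, b))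
     = (\<Sum>b\<in>{1..k}. ennreal (exp ((real b - real c) * \<theta>) * Cblock Cm1 C0 C1 k (real k * \<theta>) (l, c) (j, b)))"
    unfolding to_nn_def by (intro sum.cong refl) (rule ennreal_mult[symmetric], simp, rule nn)
  also have "\<dots> = ennreal (\<Sum>b\<in>{1..k}. exp ((real b - real c) * \<theta>) * Cblock Cm1 C0 C1 k (real k * \<theta>) (l, c) (j, b))"
    by (rule sum_ennreal) (intro mult_nonneg_nonneg nn, simp)
  also have "\<dots> = to_nn (Cstar Cm1 C0 C1 \<theta>) l j"
    unfolding to_nn_def by (simp only: block_row[OF c])
  finally show ?thesis .
qed

theorem propositionA1:
  fixes Cm1 C0 C1 :: "'i::countable \<Rightarrow> 'i \<Rightarrow> real"
    and k :: nat and \<theta> :: real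
  assumes nonneg: "\<forall>i j. Cm1 i j \<ge> 0 \<and> C0 i j \<ge> 0 \<and> C1 i j \<ge> 0"
    and finite_pow: "\<forall>n i j. nnmat_pow UNIV (to_nn (Cstar Cm1 C0 C1 0)) n i j < top"
    and irred: "\<forall>i j. \<exists>n. nnmat_pow UNIV (to_nn (Cstar Cm1 C0 C1 0)) n i j > 0"
    and k_pos: "k \<ge> 1"
  shows "conv_param UNIV (Cstar Cm1 C0 C1 \<theta>)
       = conv_param (UNIV \<times> {1..k}) (Cblock Cm1 C0 C1 k (real k * \<theta>))"
proof -
  define S where "S = (UNIV :: 'i set) \<times> {1..k}"
  define X where "X = to_nn (Cblock Cm1 C0 C1 k (real k * \<theta>))"
  define Cm where "Cm = to_nn (Cstar Cm1 C0 C1 \<theta>)"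
  define w where "w = (\<lambda>a b::nat. ennreal (exp ((real b - real a) * \<theta>)))"
  have wmul: "w a b = w a c * w c b" for a b c
    unfolding w_def by (simp add: ennreal_mult[symmetric] exp_add[symmetric] algebra_simps)
  have row: "(\<Sum>b\<in>{1..k}. w c b * X (l, c) (j, b)) = Cm l j" if "c \<in> {1..k}" for c l j
    unfolding w_def X_def Cm_def using ennreal_row[OF nonneg that] by simp
  have key: "(\<Sum>b\<in>{1..k}. w a b * nnmat_pow S X n (i, a) (j, b)) = nnmat_pow UNIV Cm n i j"
    if "a \<in> {1..k}" for n i j a
    using that
  proof (induction n arbitrary: i j a)
    case 0
    have "(\<Sum>b\<in>{1..k}. w a b * nnmat_pow S X 0 (i, a) (j, b)) = (\<Sum>b\<in>{1..k}. if b = a then (if i = j then 1 else 0) else 0)"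
      by (intro sum.cong refl) (auto simp: w_def)
    also have "\<dots> = (if i = j then 1 else 0)" using 0 by simp
    finally show ?case by simp
  next
    case (Suc n)
    have "(\<Sum>b\<in>{1..k}. w a b * nnmat_pow S X (Suc n) (i, a) (j, b))
        = (\<Sum>b\<in>{1..k}. infsum (\<lambda>p. w a b * (nnmat_pow S X n (i, a) p * X p (j, b))) S)"
      by (simp add: nnmat_mult_def infsum_cmult_enn)
    also have "\<dots> = infsum (\<lambda>p. \<Sum>b\<in>{1..k}. w a b * (nnmat_pow S X n (i, a) p * X p (j, b))) S"
      by (rule infsum_sum_enn[symmetric]) simp
    also have "\<dots> = infsum (\<lambda>p. nnmat_pow S X n (i, a) p * w a (snd p) * Cm (fst p) j) S"
    proof (rule infsum_cong)
      fix p assume "p \<in> S"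
      then obtain l c where p: "p = (l, c)" and c: "c \<in> {1..k}" unfolding S_def by auto
      have "(\<Sum>b\<in>{1..k}. w a b * (nnmat_pow S X n (i, a) p * X p (j, b)))
          = (\<Sum>b\<in>{1..k}. nnmat_pow S X n (i, a) p * w a c * (w c b * X (l, c) (j, b)))"
      proof (intro sum.cong refl)
        fix b
        show "w a b * (nnmat_pow S X n (i, a) p * X p (j, b)) = nnmat_pow S X n (i, a) p * w a c * (w c b * X (l, c) (j, b))"
          by (subst wmul[of a b c]) (simp add: p mult_ac)
      qed
      also have "\<dots> = nnmat_pow S X n (i, a) p * w a c * (\<Sum>b\<in>{1..k}. w c b * X (l, c) (j, b))"
        by (simp add: sum_distrib_left)
      also have "\<dots> = nnmat_pow S X n (i, a) p * w a (snd p) * Cm (fst p) j"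
        using row[OF c] by (simp add: p)
      finally show "(\<Sum>b\<in>{1..k}. w a b * (nnmat_pow S X n (i, a) p * X p (j, b))) = nnmat_pow S X n (i, a) p * w a (snd p) * Cm (fst p) j" .
    qed
    also have "\<dots> = (\<Sum>c\<in>{1..k}. infsum (\<lambda>l. nnmat_pow S X n (i, a) (l, c) * w a c * Cm l j) UNIV)"
      unfolding S_def by (subst infsum_times_finite_enn) simp_all
    also have "\<dots> = infsum (\<lambda>l. \<Sum>c\<in>{1..k}. nnmat_pow S X n (i, a) (l, c) * w a c * Cm l j) UNIV"
      by (rule infsum_sum_enn[symmetric]) simp
    also have "\<dots> = infsum (\<lambda>l. nnmat_pow UNIV Cm n i l * Cm l j) UNIV"
    proof (rule infsum_cong)
      fix l :: 'i
      have "(\<Sum>c\<in>{1..k}. nnmat_pow S X n (i, a) (l, c) * w a c * Cm l j)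
          = (\<Sum>c\<in>{1..k}. w a c * nnmat_pow S X n (i, a) (l, c)) * Cm l j"
        unfolding sum_distrib_right by (intro sum.cong refl) (simp add: mult_ac)
      then show "(\<Sum>c\<in>{1..k}. nnmat_pow S X n (i, a) (l, c) * w a c * Cm l j) = nnmat_pow UNIV Cm n i l * Cm l j"
        using Suc.IH[OF Suc.prems] by simp
    qed
    also have "\<dots> = nnmat_pow UNIV Cm (Suc n) i j"
      by (simp add: nnmat_mult_def)
    finally show ?case .
  qed
  have wpos: "w a b \<noteq> 0" "w a b < top" for a b unfolding w_def by auto
  have winv: "ennreal (exp ((real a - real b) * \<theta>)) * w a b = 1" for a b
    unfolding w_def by (simp add: ennreal_mult[symmetric] exp_add[symmetric] algebra_simps)
  have equiv: "(\<forall>i\<in>(UNIV::'i set). \<forall>j\<in>UNIV. (\<Sum>n. ennreal r ^ n * nnmat_pow UNIV Cm n i j) < top)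
     \<longleftrightarrow> (\<forall>p\<in>S. \<forall>q\<in>S. (\<Sum>n. ennreal r ^ n * nnmat_pow S X n p q) < top)" for r
  proof
    assume H: "\<forall>i\<in>(UNIV::'i set). \<forall>j\<in>UNIV. (\<Sum>n. ennreal r ^ n * nnmat_pow UNIV Cm n i j) < top"
    show "\<forall>p\<in>S. \<forall>q\<in>S. (\<Sum>n. ennreal r ^ n * nnmat_pow S X n p q) < top"
    proof (intro ballI)
      fix p q assume "p \<in> S" "q \<in> S"
      then obtain i a j b where pq: "p = (i, a)" "q = (j, b)" and ab: "a \<in> {1..k}" "b \<in> {1..k}"
        unfolding S_def by auto
      define e where "e = ennreal (exp ((real a - real b) * \<theta>))"
      have le: "ennreal r ^ n * nnmat_pow S X n p q \<le> e * (ennreal r ^ n * nnmat_pow UNIV Cm n i j)" for n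
      proof -
        have "w a b * nnmat_pow S X n (i, a) (j, b) \<le> (\<Sum>b\<in>{1..k}. w a b * nnmat_pow S X n (i, a) (j, b))"
          by (rule member_le_sum) (use ab in auto)
        then have "w a b * nnmat_pow S X n (i, a) (j, b) \<le> nnmat_pow UNIV Cm n i j"
          using key[OF ab(1)] by simp
        then have "e * (ennreal r ^ n * (w a b * nnmat_pow S X n (i, a) (j, b))) \<le> e * (ennreal r ^ n * nnmat_pow UNIV Cm n i j)"
          by (intro mult_left_mono) auto
        moreover have "e * (ennreal r ^ n * (w a b * nnmat_pow S X n (i, a) (j, b))) = ennreal r ^ n * nnmat_pow S X n p q"
        proof -
          have "e * (ennreal r ^ n * (w a b * nnmat_pow S X n (i, a) (j, b))) = (e * w a b) * (ennreal r ^ n * nnmat_pow S X n (i, a) (j, b))"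
            by (simp add: mult_ac)
          then show ?thesis using winv[of a b] unfolding e_def pq by simp
        qed
        ultimately show ?thesis by simp
      qed
      have "(\<Sum>n. ennreal r ^ n * nnmat_pow S X n p q) \<le> (\<Sum>n. e * (ennreal r ^ n * nnmat_pow UNIV Cm n i j))"
        by (intro suminf_le le) auto
      also have "\<dots> = e * (\<Sum>n. ennreal r ^ n * nnmat_pow UNIV Cm n i j)"
        by (rule ennreal_suminf_cmult)
      also have "\<dots> < top"
        using H unfolding e_def by (simp add: ennreal_mult_less_top)
      finally show "(\<Sum>n. ennreal r ^ n * nnmat_pow S X n p q) < top" .
    qed
  next
    assume H: "\<forall>p\<in>S. \<forall>q\<in>S. (\<Sum>n. ennreal r ^ n * nnmat_pow S X n p q) < top"
    show "\<forall>i\<in>(UNIV::'i set). \<forall>j\<in>UNIV. (\<Sum>n. ennreal r ^ n * nnmat_pow UNIV Cm n i j) < top"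
    proof (intro ballI)
      fix i j :: 'i
      have one: "1 \<in> {1..k}" using k_pos by simp
      have "(\<Sum>n. ennreal r ^ n * nnmat_pow UNIV Cm n i j)
          = (\<Sum>n. \<Sum>b\<in>{1..k}. w 1 b * (ennreal r ^ n * nnmat_pow S X n (i, 1) (j, b)))"
      proof (rule suminf_cong)
        fix n
        have "ennreal r ^ n * nnmat_pow UNIV Cm n i j = ennreal r ^ n * (\<Sum>b\<in>{1..k}. w 1 b * nnmat_pow S X n (i, 1) (j, b))"
          using key[OF one] by simp
        also have "\<dots> = (\<Sum>b\<in>{1..k}. w 1 b * (ennreal r ^ n * nnmat_pow S X n (i, 1) (j, b)))"
          unfolding sum_distrib_left by (intro sum.cong refl) (simp add: mult_ac)
        finally show "ennreal r ^ n * nnmat_pow UNIV Cm n i j = (\<Sum>b\<in>{1..k}. w 1 b * (ennreal r ^ n * nnmat_pow S X n (i, 1) (j, b)))" .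
      qed
      also have "\<dots> = (\<Sum>b\<in>{1..k}. \<Sum>n. w 1 b * (ennreal r ^ n * nnmat_pow S X n (i, 1) (j, b)))"
        by (rule suminf_sum) (rule summableI)
      also have "\<dots> = (\<Sum>b\<in>{1..k}. w 1 b * (\<Sum>n. ennreal r ^ n * nnmat_pow S X n (i, 1) (j, b)))"
        by (simp add: ennreal_suminf_cmult)
      also have "\<dots> < top"
      proof (subst ennreal_sum_less_top, simp, intro ballI)
        fix b assume b: "b \<in> {1..k}"
        have "(i, 1) \<in> S" "(j, b) \<in> S" using one b unfolding S_def by auto
        then show "w 1 b * (\<Sum>n. ennreal r ^ n * nnmat_pow S X n (i, 1) (j, b)) < top"
          using H wpos by (simp add: ennreal_mult_less_top)
      qed
      finally show "(\<Sum>n. ennreal r ^ n * nnmat_pow UNIV Cm n i j) < top" .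
    qed
  qed
  show ?thesis
    unfolding conv_param_def
    using equiv unfolding S_def X_def Cm_def by simp
qed

end
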